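(* Let $G$ and $H$ be nontrivial finite groups such that the cyclic graph $\Delta(G\times H)$ is connected. Then $\mathrm{diam}(\Delta(G\times H))\le 7$.
   Context: For a finite group $X$, the cyclic graph $\Delta(X)$ has vertex set $X^{\#}=X\setminus\{1\}$, and distinct vertices $x,y$ are adjacent if and only if the subgroup $\langle x,y\rangle$ is cyclic. The diameter is the maximum graph distance between two vertices. *)

theory Defs
  imports "HOL-Algebra.Algebra"
begin

definition cyc_vertices :: "('a, 'b) monoid_scheme \<Rightarrow> 'a set" where
  "cyc_vertices G = carrier G - {\<one>\<^bsub>G\<^esub>}"

definition cyc_adj :: "('a, 'b) monoid_scheme \<Rightarrow> 'a \<Rightarrow> 'a \<Rightarrow> bool" where
  "cyc_adj G x y \<longleftrightarrow> x \<in> cyc_vertices G \<and> y \<in> cyc_vertices G \<and> x \<noteq> y \<and>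
     cyclic_group (subgroup_generated G {x, y})"

definition cyc_walk :: "('a, 'b) monoid_scheme \<Rightarrow> 'a list \<Rightarrow> bool" where
  "cyc_walk G ps \<longleftrightarrow> ps \<noteq> [] \<and> set ps \<subseteq> cyc_vertices G \<and>
     (\<forall>i. Suc i < length ps \<longrightarrow> cyc_adj G (ps ! i) (ps ! Suc i))"

definition cyc_connected :: "('a, 'b) monoid_scheme \<Rightarrow> bool" where
  "cyc_connected G \<longleftrightarrow> (\<forall>x\<in>cyc_vertices G. \<forall>y\<in>cyc_vertices G.
     \<exists>ps. cyc_walk G ps \<and> hd ps = x \<and> last ps = y)"

text \<open>Graph distance (number of edges of a shortest walk); meaningful when connected.\<close>
definition cyc_dist :: "('a, 'b) monoid_scheme \<Rightarrow> 'a \<Rightarrow> 'a \<Rightarrow> nat" where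
  "cyc_dist G x y = (LEAST n. \<exists>ps. cyc_walk G ps \<and> hd ps = x \<and> last ps = y \<and> length ps = Suc n)"

definition cyc_diam :: "('a, 'b) monoid_scheme \<Rightarrow> nat" where
  "cyc_diam G = Max {cyc_dist G x y | x y. x \<in> cyc_vertices G \<and> y \<in> cyc_vertices G}"

end

theory Submission
  imports Defs
begin

inductive wk :: "('a, 'b) monoid_scheme \<Rightarrow> 'a \<Rightarrow> 'a \<Rightarrow> nat \<Rightarrow> bool" for M where
  wk0: "x \<in> cyc_vertices M \<Longrightarrow> wk M x x 0"
| wkS: "cyc_adj M x y \<Longrightarrow> wk M y z n \<Longrightarrow> wk M x z (Suc n)"

lemma adj_vert: "cyc_adj M x y \<Longrightarrow> x \<in> cyc_vertices M \<and> y \<in> cyc_vertices M"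
  by (simp add: cyc_adj_def)

lemma adj_sym: "cyc_adj M x y \<Longrightarrow> cyc_adj M y x"
  unfolding cyc_adj_def by (auto simp: insert_commute)

lemma wk_vert: "wk M x y n \<Longrightarrow> x \<in> cyc_vertices M \<and> y \<in> cyc_vertices M"
  by (induction rule: wk.induct) (auto simp: cyc_adj_def)

lemma wk_walk: "wk M x y n \<Longrightarrow> \<exists>ps. cyc_walk M ps \<and> hd ps = x \<and> last ps = y \<and> length ps = Suc n"
proof (induction rule: wk.induct)
  case (wk0 x)
  then show ?case by (intro exI[of _ "[x]"]) (auto simp: cyc_walk_def)
next
  case (wkS x y z n)
  then obtain ps where ps: "cyc_walk M ps" "hd ps = y" "last ps = z" "length ps = Suc n" by blast
  have "cyc_walk M (x # ps)"
    unfolding cyc_walk_def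
  proof (intro conjI allI impI)
    show "set (x # ps) \<subseteq> cyc_vertices M" using ps wkS(1) by (auto simp: cyc_walk_def cyc_adj_def)
    fix i assume "Suc i < length (x # ps)"
    then show "cyc_adj M ((x # ps) ! i) ((x # ps) ! Suc i)"
    proof (cases i)
      case 0
      have "ps \<noteq> []" using ps(4) by auto
      then have "ps ! 0 = y" using ps(2) by (simp add: hd_conv_nth)
      then show ?thesis using 0 wkS(1) by simp
    next
      case (Suc j)
      then show ?thesis using ps(1) \<open>Suc i < length (x # ps)\<close> unfolding cyc_walk_def by simp
    qed
  qed simp
  then show ?case using ps by (intro exI[of _ "x # ps"]) auto
qed

lemma wk_snoc: "wk M x y n \<Longrightarrow> cyc_adj M y z \<Longrightarrow> wk M x z (Suc n)"
proof (induction rule: wk.induct)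
  case (wk0 x)
  then show ?case using adj_vert wk.intros by metis
next
  case (wkS x y z n)
  then show ?case using wk.intros by metis
qed

lemma wk_sym: "wk M x y n \<Longrightarrow> wk M y x n"
proof (induction rule: wk.induct)
  case (wk0 x)
  then show ?case using wk.intros by metis
next
  case (wkS x y z n)
  then show ?case using wk_snoc adj_sym by metis
qed

lemma wk_trans: "wk M x y n \<Longrightarrow> wk M y z m \<Longrightarrow> wk M x z (n + m)"
proof (induction rule: wk.induct)
  case (wk0 x)
  then show ?case by simp
next
  case (wkS x y z n)
  then show ?case using wk.intros by fastforce
qed

definition D :: "('a, 'b) monoid_scheme \<Rightarrow> nat \<Rightarrow> 'a \<Rightarrow> 'a \<Rightarrow> bool" where
  "D M k x y \<longleftrightarrow> (\<exists>n\<le>k. wk M x y n)"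

lemma D_refl: "x \<in> cyc_vertices M \<Longrightarrow> D M k x x"
  unfolding D_def by (auto intro: wk.intros)

lemma D_adj: "cyc_adj M x y \<Longrightarrow> 1 \<le> k \<Longrightarrow> D M k x y"
proof -
  assume a: "cyc_adj M x y" "1 \<le> k"
  have "wk M y y 0" using a adj_vert wk.intros by metis
  then have "wk M x y (Suc 0)" using a wk.intros by metis
  then show ?thesis unfolding D_def using a by (intro exI[of _ "Suc 0"]) simp
qed

lemma D_sym: "D M k x y \<Longrightarrow> D M k y x"
  unfolding D_def using wk_sym by metis

lemma D_trans: "D M a x y \<Longrightarrow> D M b y z \<Longrightarrow> a + b \<le> k \<Longrightarrow> D M k x z"
proof -
  assume a: "D M a x y" "D M b y z" "a + b \<le> k"
  obtain n where n: "n \<le> a" "wk M x y n" using a(1) unfolding D_def by blast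
  obtain m where m: "m \<le> b" "wk M y z m" using a(2) unfolding D_def by blast
  have "wk M x z (n + m)" using wk_trans[OF n(2) m(2)] .
  moreover have "n + m \<le> k" using n(1) m(1) a(3) by simp
  ultimately show ?thesis unfolding D_def by blast
qed

lemma D_mono: "D M a x y \<Longrightarrow> a \<le> b \<Longrightarrow> D M b x y"
proof -
  assume a: "D M a x y" "a \<le> b"
  then obtain n where "n \<le> a" "wk M x y n" unfolding D_def by blast
  then show ?thesis unfolding D_def using a(2) by (intro exI[of _ n]) simp
qed

lemma D_dist: "D M k x y \<Longrightarrow> cyc_dist M x y \<le> k"
proof -
  assume "D M k x y"
  then obtain n where n: "n \<le> k" "wk M x y n" unfolding D_def by blast
  have ex: "\<exists>ps. cyc_walk M ps \<and> hd ps = x \<and> last ps = y \<and> length ps = Suc n"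
    by (rule wk_walk[OF n(2)])
  have "cyc_dist M x y \<le> n" unfolding cyc_dist_def
    by (rule Least_le[of "\<lambda>n. \<exists>ps. cyc_walk M ps \<and> hd ps = x \<and> last ps = y \<and> length ps = Suc n", OF ex])
  then show ?thesis using n by simp
qed

lemma diam_le:
  assumes "cyc_vertices M \<noteq> {}" "\<And>x y. x \<in> cyc_vertices M \<Longrightarrow> y \<in> cyc_vertices M \<Longrightarrow> D M k x y"
  shows "cyc_diam M \<le> k"
proof -
  let ?S = "{cyc_dist M x y | x y. x \<in> cyc_vertices M \<and> y \<in> cyc_vertices M}"
  have sub: "?S \<subseteq> {..k}"
  proof
    fix t assume "t \<in> ?S"
    then obtain x y where "t = cyc_dist M x y" "x \<in> cyc_vertices M" "y \<in> cyc_vertices M" by blast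
    then have "cyc_dist M x y \<le> k" using assms(2)[of x y] D_dist[of M k x y] by simp
    then show "t \<in> {..k}" using \<open>t = cyc_dist M x y\<close> by simp
  qed
  have fin: "finite ?S" using finite_subset[OF sub] by blast
  obtain x where "x \<in> cyc_vertices M" using assms(1) by blast
  then have "cyc_dist M x x \<in> ?S" by blast
  then have ne: "?S \<noteq> {}" by (metis empty_iff)
  have "Max ?S \<in> ?S" using fin ne by (rule Max_in)
  with sub have "Max ?S \<in> {..k}" by (rule subsetD)
  then have "Max ?S \<le> k" by simp
  then show ?thesis unfolding cyc_diam_def .
qed

abbreviation nprime :: "nat \<Rightarrow> bool" where "nprime p \<equiv> Factorial_Ring.prime p"

lemma primepow_of_factors:
  fixes m p :: nat
  assumes "m > 0" "nprime p" "\<And>r. nprime r \<Longrightarrow> r dvd m \<Longrightarrow> r = p"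
  shows "\<exists>e. m = p ^ e"
  using assms
proof (induction m rule: less_induct)
  case (less m)
  show ?case
  proof (cases "m = 1")
    case True
    then show ?thesis by (intro exI[of _ 0]) simp
  next
    case False
    then obtain r where r: "nprime r" "r dvd m" using prime_factor_nat by blast
    then have "r = p" using less.prems by blast
    then obtain m' where m': "m = p * m'" using r by (auto elim: dvdE)
    have p1: "p > 1" using less.prems(2) prime_gt_1_nat by blast
    have "m' > 0" using m' less.prems(1) by simp
    then have "m' < m" using m' p1 by simp
    have "\<And>r. nprime r \<Longrightarrow> r dvd m' \<Longrightarrow> r = p" using less.prems(3) m' by simp
    then obtain e where "m' = p ^ e" using less.IH[OF \<open>m' < m\<close> \<open>m' > 0\<close> less.prems(2)] by blast
    then show ?thesis using m' by (intro exI[of _ "Suc e"]) simp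
  qed
qed

context group
begin

lemma pow_in_gen: "a \<in> carrier G \<Longrightarrow> a [^] (n::nat) \<in> generate G {a}"
proof -
  assume a: "a \<in> carrier G"
  have "a [^] n = a [^] (int n)" by (simp add: int_pow_int)
  also have "\<dots> \<in> generate G {a}" unfolding generate_pow[OF a] by auto
  finally show ?thesis .
qed

lemma pow_in_gen_sub:
  assumes "a \<in> S" "S \<subseteq> carrier G"
  shows "a [^] (n::nat) \<in> generate G S"
proof -
  have "a \<in> carrier G" using assms by blast
  then have "a [^] n \<in> generate G {a}" by (rule pow_in_gen)
  moreover have "generate G {a} \<subseteq> generate G S" using mono_generate[of "{a}" S] assms(1) by simp
  ultimately show ?thesis by (rule subsetD[rotated])
qed

lemma adj_gen:
  assumes "u \<in> carrier G" "v \<in> carrier G" "w \<in> carrier G" "u \<noteq> \<one>" "v \<noteq> \<one>" "u \<noteq> v"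
    "generate G {u, v} = generate G {w}"
  shows "cyc_adj G u v"
proof -
  have e1: "carrier G \<inter> {u, v} = {u, v}" "carrier G \<inter> {w} = {w}" using assms by auto
  have "subgroup_generated G {u, v} = subgroup_generated G {w}"
    unfolding subgroup_generated_def e1 assms(7) ..
  then have "cyclic_group (subgroup_generated G {u, v})" using cyclic_group_generated by simp
  then show ?thesis using assms unfolding cyc_adj_def cyc_vertices_def by auto
qed

lemma adj_pow:
  assumes "u \<in> carrier G" "u \<noteq> \<one>" "u [^] (k::nat) \<noteq> \<one>" "u [^] k \<noteq> u"
  shows "cyc_adj G u (u [^] k)"
proof -
  have "generate G {u, u [^] k} = generate G {u}"
  proof
    show "generate G {u, u [^] k} \<subseteq> generate G {u}"
      apply (rule generate_subgroup_incl)
      using pow_in_gen[OF assms(1)] generate.incl[of u "{u}" G] generate_is_subgroup assms(1) by auto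
    show "generate G {u} \<subseteq> generate G {u, u [^] k}" by (rule mono_generate) auto
  qed
  then show ?thesis using adj_gen assms by auto
qed

lemma comm_pow_gen:
  assumes "u \<in> carrier G" "v \<in> carrier G" "u \<otimes> v = v \<otimes> u" "coprime (ord u) (ord v)" "ord v \<noteq> 0"
  shows "u \<in> generate G {u \<otimes> v}"
proof -
  obtain s t where st: "ord v * s = ord u * t + gcd (ord v) (ord u)"
    using bezout_nat[OF assms(5)] by blast
  have g1: "gcd (ord v) (ord u) = 1" using assms(4) by (simp add: coprime_iff_gcd_eq_1 gcd.commute)
  have "(u \<otimes> v) [^] (ord v * s) = u [^] (ord v * s) \<otimes> v [^] (ord v * s)"
    using pow_mult_distrib assms by blast
  also have "v [^] (ord v * s) = \<one>" using assms(2) by (simp add: nat_pow_pow[symmetric])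
  also have "u [^] (ord v * s) = u [^] (ord u * t) \<otimes> u [^] (1::nat)" using st g1 assms(1)
    by (simp add: nat_pow_mult)
  also have "u [^] (ord u * t) = \<one>" using assms(1) by (simp add: nat_pow_pow[symmetric])
  finally have "(u \<otimes> v) [^] (ord v * s) = u" using assms(1) by simp
  moreover have "(u \<otimes> v) [^] (ord v * s) \<in> generate G {u \<otimes> v}"
    using pow_in_gen assms by simp
  ultimately show ?thesis by simp
qed

lemma adj_comm:
  assumes "u \<in> carrier G" "v \<in> carrier G" "u \<otimes> v = v \<otimes> u"
    "nprime (ord u)" "nprime (ord v)" "ord u \<noteq> ord v"
  shows "cyc_adj G u v"
proof -
  have cop: "coprime (ord u) (ord v)" using assms primes_coprime by blast
  have nz: "ord u \<noteq> 0" "ord v \<noteq> 0" using assms(4,5) by auto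
  have uv: "u \<otimes> v \<in> carrier G" using assms by simp
  have "generate G {u, v} = generate G {u \<otimes> v}"
  proof
    have "u \<in> generate G {u \<otimes> v}" using comm_pow_gen assms cop nz by blast
    moreover have "v \<in> generate G {v \<otimes> u}"
      using comm_pow_gen[of v u] assms cop nz by (simp add: coprime_commute)
    ultimately show "generate G {u, v} \<subseteq> generate G {u \<otimes> v}"
      using generate_is_subgroup uv assms(3) by (intro generate_subgroup_incl) auto
    have gu: "u \<in> generate G {u, v}" by (rule generate.incl) simp
    have gv: "v \<in> generate G {u, v}" by (rule generate.incl) simp
    have "u \<otimes> v \<in> generate G {u, v}" using generate.eng[OF gu gv] .
    moreover have "subgroup (generate G {u, v}) G" using generate_is_subgroup assms(1,2) by simp
    ultimately show "generate G {u \<otimes> v} \<subseteq> generate G {u, v}"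
      by (intro generate_subgroup_incl) auto
  qed
  moreover have "u \<noteq> \<one>" "v \<noteq> \<one>" using assms(4,5) ord_eq_1 assms(1,2) by auto
  moreover have "u \<noteq> v" using assms(6) by auto
  ultimately show ?thesis using adj_gen assms uv by blast
qed

lemma prime_pow_exists:
  assumes "finite (carrier G)" "v \<in> carrier G" "v \<noteq> \<one>"
  shows "\<exists>k::nat. nprime (ord (v [^] k)) \<and> v [^] k \<noteq> \<one>"
proof -
  have o1: "ord v \<ge> 1" using ord_ge_1 assms by blast
  moreover have "ord v \<noteq> 1" using ord_eq_1 assms by blast
  ultimately obtain p where p: "nprime p" "p dvd ord v" using prime_factor_nat by blast
  then obtain k where k: "ord v = p * k" by (elim dvdE)
  have k0: "k \<noteq> 0" using k o1 by (intro notI) simp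
  have kd: "k dvd ord v" using k by simp
  have "ord (v [^] k) = ord v div k" using ord_pow[OF assms(2) kd k0] .
  also have "\<dots> = p" using k k0 by simp
  finally have pr: "nprime (ord (v [^] k))" using p by simp
  have "v [^] k \<noteq> \<one>"
  proof
    assume "v [^] k = \<one>"
    then have "ord (v [^] k) = 1" by simp
    then show False using pr by simp
  qed
  then show ?thesis using pr by blast
qed

lemma int_to_nat_pow:
  assumes "finite (carrier G)" "c \<in> carrier G"
  shows "\<exists>m::nat. c [^] (n::int) = c [^] m"
proof -
  have o: "ord c > 0" using ord_ge_1 assms by fastforce
  have "int (ord c) dvd n - n mod int (ord c)" by (rule dvd_minus_mod)
  then have e1: "c [^] (n mod int (ord c)) = c [^] n" using int_pow_eq[OF assms(2), of "n mod int (ord c)" n] by simp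
  have e2: "n mod int (ord c) = int (nat (n mod int (ord c)))" using o by simp
  have "c [^] n = c [^] (nat (n mod int (ord c)))" using e1 e2 int_pow_int by metis
  then show ?thesis by blast
qed

end

context group
begin

lemma cyc_step:
  assumes fin: "finite (carrier G)"
    and ab: "a \<in> carrier G" "b \<in> carrier G" "b \<noteq> \<one>"
    and cyc: "cyclic_group (subgroup_generated G {a, b})"
    and x: "x = a [^] (k::nat)" "nprime (ord x)"
    and noz: "\<not> (\<exists>z\<in>carrier G. nprime (ord z) \<and> ord z \<noteq> ord x \<and> z \<otimes> x = x \<otimes> z)"
  shows "\<exists>k'::nat. x = b [^] k'"
proof -
  let ?S = "subgroup_generated G {a, b}"
  have e1: "carrier G \<inter> {a, b} = {a, b}" using ab by auto
  have cS: "carrier ?S = generate G {a, b}"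
    unfolding carrier_subgroup_generated e1 ..
  have grp: "group ?S" by (rule group_subgroup_generated)
  have "\<exists>c\<in>carrier ?S. carrier ?S = range (\<lambda>n::int. c [^]\<^bsub>?S\<^esub> n)"
    using group.cyclic_group[OF grp] cyc by blast
  then obtain c where c: "c \<in> carrier ?S" "carrier ?S = range (\<lambda>n::int. c [^]\<^bsub>?S\<^esub> n)"
    by blast
  have gsub: "generate G {a, b} \<subseteq> carrier G" using generate_incl ab by simp
  have cG: "c \<in> carrier G" using c(1) cS gsub by blast
  have elems: "\<exists>m::nat. y = c [^] m" if "y \<in> generate G {a, b}" for y
  proof -
    have "y \<in> range (\<lambda>n::int. c [^]\<^bsub>?S\<^esub> n)" using that cS c(2) by simp
    then obtain n :: int where "y = c [^]\<^bsub>?S\<^esub> n" by blast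
    then have "y = c [^] n" using int_pow_subgroup_generated[OF c(1)] by simp
    then show ?thesis using int_to_nat_pow[OF fin cG, of n] by metis
  qed
  have xin: "x \<in> generate G {a, b}" using pow_in_gen_sub[of a "{a, b}" k] ab x(1) by simp
  have bin: "b \<in> generate G {a, b}" by (rule generate.incl) simp
  obtain i :: nat where i: "x = c [^] i" using elems[OF xin] by blast
  obtain j :: nat where j: "b = c [^] j" using elems[OF bin] by blast
  define m where "m = ord c"
  define p where "p = ord x"
  have m0: "m > 0" unfolding m_def using ord_ge_1[OF fin cG] by simp
  have pp: "nprime p" unfolding p_def using x(2) .
  have fac: "r = p" if r: "nprime r" "r dvd m" for r
  proof (rule ccontr)
    assume rp: "r \<noteq> p"
    define z where "z = c [^] (m div r)"
    have "(m div r) dvd m" using dvd_div_mult_self[OF r(2)] by (metis dvd_triv_left)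
    then have d1: "(m div r) dvd ord c" unfolding m_def .
    have d2: "m div r \<noteq> 0" using dvd_div_eq_0_iff[OF r(2)] m0 by simp
    have "ord z = ord c div (m div r)" unfolding z_def using ord_pow[OF cG d1 d2] .
    also have "\<dots> = r"
    proof -
      obtain q where q: "m = r * q" using r(2) by (elim dvdE)
      have q0: "q \<noteq> 0" using q m0 by (intro notI) simp
      have "r \<noteq> 0" using r(1) by (intro notI) simp
      then have "m div r = q" using q by simp
      then show ?thesis unfolding m_def[symmetric] using q q0 by simp
    qed
    finally have oz: "ord z = r" .
    have zc: "z \<in> carrier G" unfolding z_def using cG by simp
    have "z \<otimes> x = x \<otimes> z" unfolding z_def i using nat_pow_comm[OF cG] by simp
    then show False using noz zc oz r(1) rp unfolding p_def by blast
  qed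
  obtain e where e: "m = p ^ e" using primepow_of_factors[OF m0 pp fac] by blast
  have bj: "\<not> m dvd j"
  proof
    assume "m dvd j"
    then have "c [^] j = \<one>" using pow_eq_id[OF cG] unfolding m_def by simp
    then show False using j ab(3) by simp
  qed
  have j0: "j \<noteq> 0" using bj by (intro notI) simp
  define g where "g = gcd j m"
  have "g dvd p ^ e" unfolding g_def e[symmetric] by simp
  then obtain l where l: "l \<le> e" "g = p ^ l" using divides_primepow_nat[OF pp] by blast
  have "l \<noteq> e"
  proof
    assume "l = e"
    then have "g = m" using l e by simp
    then have "m dvd j" unfolding g_def by (metis gcd_dvd1)
    then show False using bj by simp
  qed
  then have le: "l \<le> e - 1" using l(1) by simp
  have e1': "e \<ge> 1" using \<open>l \<noteq> e\<close> l(1) by simp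
  have xc: "x \<in> carrier G" using i cG by simp
  have "x [^] p = \<one>" unfolding p_def by (rule pow_ord_eq_1[OF xc])
  then have "c [^] (i * p) = \<one>" using i cG by (simp add: nat_pow_pow)
  then have "m dvd i * p" using pow_eq_id[OF cG] unfolding m_def by simp
  moreover have "m = p ^ (e - 1) * p" using e power_minus_mult[of e p] e1' by simp
  ultimately have "p ^ (e - 1) * p dvd i * p" by simp
  moreover have "p \<noteq> 0" using pp by (intro notI) simp
  ultimately have d3: "p ^ (e - 1) dvd i" using dvd_times_right_cancel_iff by blast
  have "p ^ l dvd p ^ (e - 1)" using le by (rule le_imp_power_dvd)
  then have "g dvd i" using dvd_trans[OF _ d3] l(2) by simp
  then obtain t where t: "i = g * t" by (elim dvdE)
  obtain s y0 where bez: "j * s = m * y0 + g" using bezout_nat[OF j0, of m] unfolding g_def by blast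
  have "b [^] s = c [^] (j * s)" using j cG by (simp add: nat_pow_pow)
  also have "\<dots> = c [^] (m * y0) \<otimes> c [^] g" using bez cG by (simp add: nat_pow_mult)
  also have "c [^] (m * y0) = \<one>" using cG unfolding m_def by (simp add: nat_pow_pow[symmetric])
  finally have bs: "b [^] s = c [^] g" using cG by simp
  have "x = (c [^] g) [^] t" using i t cG by (simp add: nat_pow_pow)
  also have "\<dots> = (b [^] s) [^] t" using bs by simp
  also have "\<dots> = b [^] (s * t)" using ab(2) by (simp add: nat_pow_pow)
  finally show ?thesis by blast
qed

lemma lemC:
  assumes fin: "finite (carrier G)" and conn: "cyc_connected G"
    and x: "x \<in> carrier G" "nprime (ord x)" and y: "y \<in> cyc_vertices G"
    and notin: "\<not> (\<exists>k::nat. x = y [^] k)"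
  shows "\<exists>z\<in>carrier G. nprime (ord z) \<and> ord z \<noteq> ord x \<and> z \<otimes> x = x \<otimes> z"
proof (rule ccontr)
  assume noz: "\<not> (\<exists>z\<in>carrier G. nprime (ord z) \<and> ord z \<noteq> ord x \<and> z \<otimes> x = x \<otimes> z)"
  have "x \<noteq> \<one>" using x(2) by (intro notI) simp
  then have xv: "x \<in> cyc_vertices G" using x(1) unfolding cyc_vertices_def by simp
  obtain ps where ps: "cyc_walk G ps" "hd ps = x" "last ps = y"
    using conn xv y unfolding cyc_connected_def by blast
  have ne: "ps \<noteq> []" using ps(1) unfolding cyc_walk_def by simp
  have main: "i < length ps \<longrightarrow> (\<exists>k::nat. x = (ps ! i) [^] k)" for i
  proof (induction i)
    case 0
    have "ps ! 0 = x" using ps(2) ne by (simp add: hd_conv_nth)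
    then show ?case using x(1) by (intro impI exI[of _ 1]) simp
  next
    case (Suc i)
    show ?case
    proof
      assume si: "Suc i < length ps"
      then obtain k :: nat where k: "x = (ps ! i) [^] k" using Suc.IH by auto
      have adj: "cyc_adj G (ps ! i) (ps ! Suc i)" using ps(1) si unfolding cyc_walk_def by blast
      then have v: "ps ! i \<in> cyc_vertices G" "ps ! Suc i \<in> cyc_vertices G" by (simp_all add: cyc_adj_def)
      have cy: "cyclic_group (subgroup_generated G {ps ! i, ps ! Suc i})" using adj by (simp add: cyc_adj_def)
      show "\<exists>k::nat. x = (ps ! Suc i) [^] k"
        using cyc_step[OF fin _ _ _ cy k x(2) noz] v unfolding cyc_vertices_def by blast
    qed
  qed
  have "length ps - 1 < length ps" using ne by simp
  then obtain k :: nat where "x = (ps ! (length ps - 1)) [^] k" using main by blast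
  moreover have "ps ! (length ps - 1) = y" using ps(3) ne by (simp add: last_conv_nth)
  ultimately show False using notin by blast
qed

end

lemma DirProd_pow:
  "(a, b) [^]\<^bsub>G \<times>\<times> H\<^esub> (n::nat) = (a [^]\<^bsub>G\<^esub> n, b [^]\<^bsub>H\<^esub> n)"
  by (induction n) simp_all

locale twogrp = G: group G + H: group H
  for G :: "('a, 'c) monoid_scheme" and H :: "('b, 'd) monoid_scheme" +
  assumes finG: "finite (carrier G)" and finH: "finite (carrier H)"
    and ntG: "carrier G \<noteq> {\<one>\<^bsub>G\<^esub>}" and ntH: "carrier H \<noteq> {\<one>\<^bsub>H\<^esub>}"
    and conn: "cyc_connected (G \<times>\<times> H)"
begin

sublocale X: group "G \<times>\<times> H"
  by (rule DirProd_group) (rule G.is_group, rule H.is_group)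

lemma finX: "finite (carrier (G \<times>\<times> H))"
  using finG finH by simp

lemma pow_one_iff:
  assumes "a \<in> carrier G" "b \<in> carrier H"
  shows "(a, b) [^]\<^bsub>G \<times>\<times> H\<^esub> (n::nat) = \<one>\<^bsub>G \<times>\<times> H\<^esub> \<longleftrightarrow> G.ord a dvd n \<and> H.ord b dvd n"
  using assms by (simp add: DirProd_pow G.pow_eq_id H.pow_eq_id)

lemma ordX_A: "a \<in> carrier G \<Longrightarrow> X.ord (a, \<one>\<^bsub>H\<^esub>) = G.ord a"
  using pow_one_iff[of a "\<one>\<^bsub>H\<^esub>"] by (simp add: X.ord_unique)

lemma ordX_B: "b \<in> carrier H \<Longrightarrow> X.ord (\<one>\<^bsub>G\<^esub>, b) = H.ord b"
  using pow_one_iff[of "\<one>\<^bsub>G\<^esub>" b] by (simp add: X.ord_unique)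

lemma ordX_same:
  assumes "a \<in> carrier G" "b \<in> carrier H" "G.ord a = p" "H.ord b = p"
  shows "X.ord (a, b) = p"
  using pow_one_iff[OF assms(1,2)] assms(3,4) assms(1,2) by (simp add: X.ord_unique)

lemma ord_comp:
  assumes "a \<in> carrier G" "b \<in> carrier H" "nprime (X.ord (a, b))"
  shows "(a = \<one>\<^bsub>G\<^esub> \<or> G.ord a = X.ord (a, b)) \<and> (b = \<one>\<^bsub>H\<^esub> \<or> H.ord b = X.ord (a, b))"
proof -
  let ?p = "X.ord (a, b)"
  have "(a, b) [^]\<^bsub>G \<times>\<times> H\<^esub> ?p = \<one>\<^bsub>G \<times>\<times> H\<^esub>" using assms(1,2) by (intro X.pow_ord_eq_1) simp
  then have d: "G.ord a dvd ?p" "H.ord b dvd ?p" using pow_one_iff[OF assms(1,2)] by auto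
  have "G.ord a = 1 \<or> G.ord a = ?p" using d(1) assms(3) prime_nat_iff by blast
  moreover have "H.ord b = 1 \<or> H.ord b = ?p" using d(2) assms(3) prime_nat_iff by blast
  ultimately show ?thesis using G.ord_eq_1[OF assms(1)] H.ord_eq_1[OF assms(2)] by blast
qed

lemma exG: "\<exists>a\<in>carrier G. nprime (G.ord a)"
proof -
  obtain g where g: "g \<in> carrier G" "g \<noteq> \<one>\<^bsub>G\<^esub>" using ntG G.one_closed by blast
  then obtain k :: nat where "nprime (G.ord (g [^]\<^bsub>G\<^esub> k))" using G.prime_pow_exists[OF finG] by blast
  then show ?thesis using g(1) by blast
qed

lemma exH: "\<exists>b\<in>carrier H. nprime (H.ord b)"
proof -
  obtain g where g: "g \<in> carrier H" "g \<noteq> \<one>\<^bsub>H\<^esub>" using ntH H.one_closed by blast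
  then obtain k :: nat where "nprime (H.ord (g [^]\<^bsub>H\<^esub> k))" using H.prime_pow_exists[OF finH] by blast
  then show ?thesis using g(1) by blast
qed

lemma anchor:
  assumes "a \<in> carrier G" "b \<in> carrier H" "nprime (X.ord (a, b))"
  shows "\<exists>r. nprime r \<and> r \<noteq> X.ord (a, b) \<and>
    ((\<exists>e\<in>carrier G. G.ord e = r \<and> e \<otimes>\<^bsub>G\<^esub> a = a \<otimes>\<^bsub>G\<^esub> e) \<or>
     (\<exists>f\<in>carrier H. H.ord f = r \<and> f \<otimes>\<^bsub>H\<^esub> b = b \<otimes>\<^bsub>H\<^esub> f))"
proof -
  have xne: "(a, b) \<noteq> (\<one>\<^bsub>G\<^esub>, \<one>\<^bsub>H\<^esub>)"
  proof
    assume "(a, b) = (\<one>\<^bsub>G\<^esub>, \<one>\<^bsub>H\<^esub>)"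
    then have "X.ord (a, b) = 1" using X.ord_id by simp
    then show False using assms(3) by simp
  qed
  obtain y where y: "y \<in> cyc_vertices (G \<times>\<times> H)" "\<not> (\<exists>k::nat. (a, b) = y [^]\<^bsub>G \<times>\<times> H\<^esub> k)"
  proof (cases "a = \<one>\<^bsub>G\<^esub>")
    case True
    obtain g where g: "g \<in> carrier G" "g \<noteq> \<one>\<^bsub>G\<^esub>" using ntG G.one_closed by blast
    have "b \<noteq> \<one>\<^bsub>H\<^esub>" using True xne by simp
    then have "\<not> (\<exists>k::nat. (a, b) = (g, \<one>\<^bsub>H\<^esub>) [^]\<^bsub>G \<times>\<times> H\<^esub> k)" by (simp add: DirProd_pow)
    moreover have "(g, \<one>\<^bsub>H\<^esub>) \<in> cyc_vertices (G \<times>\<times> H)" using g unfolding cyc_vertices_def by simp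
    ultimately show ?thesis using that by blast
  next
    case False
    obtain h where h: "h \<in> carrier H" "h \<noteq> \<one>\<^bsub>H\<^esub>" using ntH H.one_closed by blast
    have "\<not> (\<exists>k::nat. (a, b) = (\<one>\<^bsub>G\<^esub>, h) [^]\<^bsub>G \<times>\<times> H\<^esub> k)" using False by (simp add: DirProd_pow)
    moreover have "(\<one>\<^bsub>G\<^esub>, h) \<in> cyc_vertices (G \<times>\<times> H)" using h unfolding cyc_vertices_def by simp
    ultimately show ?thesis using that by blast
  qed
  have xc: "(a, b) \<in> carrier (G \<times>\<times> H)" using assms by simp
  obtain z where z: "z \<in> carrier (G \<times>\<times> H)" "nprime (X.ord z)" "X.ord z \<noteq> X.ord (a, b)"
      "z \<otimes>\<^bsub>G \<times>\<times> H\<^esub> (a, b) = (a, b) \<otimes>\<^bsub>G \<times>\<times> H\<^esub> z"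
    using X.lemC[OF finX conn xc assms(3) y] by blast
  obtain e f where ef: "z = (e, f)" by (cases z)
  have ec: "e \<in> carrier G" and fc: "f \<in> carrier H" using z(1) ef by auto
  have comm: "e \<otimes>\<^bsub>G\<^esub> a = a \<otimes>\<^bsub>G\<^esub> e" "f \<otimes>\<^bsub>H\<^esub> b = b \<otimes>\<^bsub>H\<^esub> f" using z(4) ef by auto
  have oc: "(e = \<one>\<^bsub>G\<^esub> \<or> G.ord e = X.ord z) \<and> (f = \<one>\<^bsub>H\<^esub> \<or> H.ord f = X.ord z)"
    using ord_comp[OF ec fc] z(2) ef by simp
  have "z \<noteq> (\<one>\<^bsub>G\<^esub>, \<one>\<^bsub>H\<^esub>)"
  proof
    assume "z = (\<one>\<^bsub>G\<^esub>, \<one>\<^bsub>H\<^esub>)"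
    then have "X.ord z = 1" using X.ord_id by simp
    then show False using z(2) by simp
  qed
  then have "G.ord e = X.ord z \<or> H.ord f = X.ord z" using oc ef by auto
  then show ?thesis using z(2,3) ec fc comm by blast
qed

end

context twogrp
begin

abbreviation "XX \<equiv> G \<times>\<times> H"

lemma AB_adj:
  assumes "a \<in> carrier G" "b \<in> carrier H" "nprime (G.ord a)" "nprime (H.ord b)" "G.ord a \<noteq> H.ord b"
  shows "cyc_adj XX (a, \<one>\<^bsub>H\<^esub>) (\<one>\<^bsub>G\<^esub>, b)"
  using X.adj_comm[of "(a, \<one>\<^bsub>H\<^esub>)" "(\<one>\<^bsub>G\<^esub>, b)"] assms ordX_A ordX_B by simp

lemma AA_adj:
  assumes "a \<in> carrier G" "e \<in> carrier G" "e \<otimes>\<^bsub>G\<^esub> a = a \<otimes>\<^bsub>G\<^esub> e"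
    "nprime (G.ord a)" "nprime (G.ord e)" "G.ord a \<noteq> G.ord e"
  shows "cyc_adj XX (a, \<one>\<^bsub>H\<^esub>) (e, \<one>\<^bsub>H\<^esub>)"
  using X.adj_comm[of "(a, \<one>\<^bsub>H\<^esub>)" "(e, \<one>\<^bsub>H\<^esub>)"] assms ordX_A by simp

lemma BB_adj:
  assumes "b \<in> carrier H" "f \<in> carrier H" "f \<otimes>\<^bsub>H\<^esub> b = b \<otimes>\<^bsub>H\<^esub> f"
    "nprime (H.ord b)" "nprime (H.ord f)" "H.ord b \<noteq> H.ord f"
  shows "cyc_adj XX (\<one>\<^bsub>G\<^esub>, b) (\<one>\<^bsub>G\<^esub>, f)"
  using X.adj_comm[of "(\<one>\<^bsub>G\<^esub>, b)" "(\<one>\<^bsub>G\<^esub>, f)"] assms ordX_B by simp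

lemma MA_adj:
  assumes "a \<in> carrier G" "b \<in> carrier H" "nprime (X.ord (a, b))" "e \<in> carrier G"
    "e \<otimes>\<^bsub>G\<^esub> a = a \<otimes>\<^bsub>G\<^esub> e" "nprime (G.ord e)" "G.ord e \<noteq> X.ord (a, b)"
  shows "cyc_adj XX (a, b) (e, \<one>\<^bsub>H\<^esub>)"
  using X.adj_comm[of "(a, b)" "(e, \<one>\<^bsub>H\<^esub>)"] assms ordX_A by simp

lemma MB_adj:
  assumes "a \<in> carrier G" "b \<in> carrier H" "nprime (X.ord (a, b))" "f \<in> carrier H"
    "f \<otimes>\<^bsub>H\<^esub> b = b \<otimes>\<^bsub>H\<^esub> f" "nprime (H.ord f)" "H.ord f \<noteq> X.ord (a, b)"
  shows "cyc_adj XX (a, b) (\<one>\<^bsub>G\<^esub>, f)"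
  using X.adj_comm[of "(a, b)" "(\<one>\<^bsub>G\<^esub>, f)"] assms ordX_B by simp

lemma D1: "cyc_adj M x y \<Longrightarrow> D M 1 x y"
  by (erule D_adj) simp

lemma vertX: "x \<in> carrier XX \<Longrightarrow> nprime (X.ord x) \<Longrightarrow> x \<in> cyc_vertices XX"
proof -
  assume a: "x \<in> carrier XX" "nprime (X.ord x)"
  have "x \<noteq> \<one>\<^bsub>XX\<^esub>"
  proof
    assume "x = \<one>\<^bsub>XX\<^esub>"
    then have "X.ord x = 1" using X.ord_id by simp
    then show False using a(2) by simp
  qed
  then show ?thesis using a(1) unfolding cyc_vertices_def by simp
qed

lemma AB2:
  assumes a: "a \<in> carrier G" "nprime (G.ord a)" and b: "b \<in> carrier H" "nprime (H.ord b)"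
  shows "D XX 2 (a, \<one>\<^bsub>H\<^esub>) (\<one>\<^bsub>G\<^esub>, b)"
proof (cases "G.ord a = H.ord b")
  case False
  then have "cyc_adj XX (a, \<one>\<^bsub>H\<^esub>) (\<one>\<^bsub>G\<^esub>, b)" using AB_adj[OF a(1) b(1) a(2) b(2)] by simp
  then show ?thesis by (rule D_adj) simp
next
  case True
  have o: "X.ord (a, b) = G.ord a" using ordX_same[OF a(1) b(1) refl] True by simp
  then have pr: "nprime (X.ord (a, b))" using a by simp
  obtain r where r: "nprime r" "r \<noteq> X.ord (a, b)" and alt:
    "(\<exists>e\<in>carrier G. G.ord e = r \<and> e \<otimes>\<^bsub>G\<^esub> a = a \<otimes>\<^bsub>G\<^esub> e) \<or>
     (\<exists>f\<in>carrier H. H.ord f = r \<and> f \<otimes>\<^bsub>H\<^esub> b = b \<otimes>\<^bsub>H\<^esub> f)"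
    using anchor[OF a(1) b(1) pr] by blast
  from alt show ?thesis
  proof
    assume "\<exists>e\<in>carrier G. G.ord e = r \<and> e \<otimes>\<^bsub>G\<^esub> a = a \<otimes>\<^bsub>G\<^esub> e"
    then obtain e where e: "e \<in> carrier G" "G.ord e = r" "e \<otimes>\<^bsub>G\<^esub> a = a \<otimes>\<^bsub>G\<^esub> e" by blast
    have 1: "cyc_adj XX (a, \<one>\<^bsub>H\<^esub>) (e, \<one>\<^bsub>H\<^esub>)"
      using AA_adj[OF a(1) e(1) e(3) a(2)] e(2) r o by simp
    have 2: "cyc_adj XX (e, \<one>\<^bsub>H\<^esub>) (\<one>\<^bsub>G\<^esub>, b)"
      using AB_adj[OF e(1) b(1)] e(2) r o b(2) True by simp
    show ?thesis by (rule D_trans[OF D1[OF 1] D1[OF 2]]) simp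
  next
    assume "\<exists>f\<in>carrier H. H.ord f = r \<and> f \<otimes>\<^bsub>H\<^esub> b = b \<otimes>\<^bsub>H\<^esub> f"
    then obtain f where f: "f \<in> carrier H" "H.ord f = r" "f \<otimes>\<^bsub>H\<^esub> b = b \<otimes>\<^bsub>H\<^esub> f" by blast
    have 1: "cyc_adj XX (a, \<one>\<^bsub>H\<^esub>) (\<one>\<^bsub>G\<^esub>, f)"
      using AB_adj[OF a(1) f(1) a(2)] f(2) r o by simp
    have 2: "cyc_adj XX (\<one>\<^bsub>G\<^esub>, f) (\<one>\<^bsub>G\<^esub>, b)"
      using BB_adj[OF f(1) b(1) f(3)[symmetric]] f(2) r o b(2) True by simp
    show ?thesis by (rule D_trans[OF D1[OF 1] D1[OF 2]]) simp
  qed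
qed

lemma AA3:
  assumes a: "a \<in> carrier G" "nprime (G.ord a)" and c: "c \<in> carrier G" "nprime (G.ord c)"
    and nex: "\<not> (G.ord a = G.ord c \<and> (\<forall>b\<in>carrier H. nprime (H.ord b) \<longrightarrow> H.ord b = G.ord a))"
  shows "D XX 3 (a, \<one>\<^bsub>H\<^esub>) (c, \<one>\<^bsub>H\<^esub>)"
proof (cases "\<exists>b\<in>carrier H. nprime (H.ord b) \<and> H.ord b \<noteq> G.ord a \<and> H.ord b \<noteq> G.ord c")
  case True
  then obtain b where b: "b \<in> carrier H" "nprime (H.ord b)" "H.ord b \<noteq> G.ord a" "H.ord b \<noteq> G.ord c" by blast
  have 1: "cyc_adj XX (a, \<one>\<^bsub>H\<^esub>) (\<one>\<^bsub>G\<^esub>, b)" using AB_adj[OF a(1) b(1) a(2) b(2)] b(3) by simp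
  have 2: "cyc_adj XX (\<one>\<^bsub>G\<^esub>, b) (c, \<one>\<^bsub>H\<^esub>)" using adj_sym[OF AB_adj[OF c(1) b(1) c(2) b(2)]] b(4) by simp
  show ?thesis by (rule D_trans[OF D1[OF 1] D1[OF 2]]) simp
next
  case False
  obtain b0 where b0: "b0 \<in> carrier H" "nprime (H.ord b0)" using exH by blast
  have ne: "G.ord a \<noteq> G.ord c"
  proof
    assume eq: "G.ord a = G.ord c"
    then obtain b where "b \<in> carrier H" "nprime (H.ord b)" "H.ord b \<noteq> G.ord a" using nex by blast
    then show False using False eq by auto
  qed
  have "H.ord b0 = G.ord a \<or> H.ord b0 = G.ord c" using False b0 by blast
  then show ?thesis
  proof
    assume h: "H.ord b0 = G.ord a"
    have 1: "D XX 2 (a, \<one>\<^bsub>H\<^esub>) (\<one>\<^bsub>G\<^esub>, b0)" by (rule AB2[OF a b0])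
    have 2: "cyc_adj XX (\<one>\<^bsub>G\<^esub>, b0) (c, \<one>\<^bsub>H\<^esub>)"
      using adj_sym[OF AB_adj[OF c(1) b0(1) c(2) b0(2)]] h ne by simp
    show ?thesis by (rule D_trans[OF 1 D1[OF 2]]) simp
  next
    assume h: "H.ord b0 = G.ord c"
    have 1: "cyc_adj XX (a, \<one>\<^bsub>H\<^esub>) (\<one>\<^bsub>G\<^esub>, b0)"
      using AB_adj[OF a(1) b0(1) a(2) b0(2)] h ne by simp
    have 2: "D XX 2 (\<one>\<^bsub>G\<^esub>, b0) (c, \<one>\<^bsub>H\<^esub>)" by (rule D_sym[OF AB2[OF c b0]])
    show ?thesis by (rule D_trans[OF D1[OF 1] 2]) simp
  qed
qed

lemma BB3:
  assumes b: "b \<in> carrier H" "nprime (H.ord b)" and d: "d \<in> carrier H" "nprime (H.ord d)"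
    and nex: "\<not> (H.ord b = H.ord d \<and> (\<forall>a\<in>carrier G. nprime (G.ord a) \<longrightarrow> G.ord a = H.ord b))"
  shows "D XX 3 (\<one>\<^bsub>G\<^esub>, b) (\<one>\<^bsub>G\<^esub>, d)"
proof (cases "\<exists>a\<in>carrier G. nprime (G.ord a) \<and> G.ord a \<noteq> H.ord b \<and> G.ord a \<noteq> H.ord d")
  case True
  then obtain a where a: "a \<in> carrier G" "nprime (G.ord a)" "G.ord a \<noteq> H.ord b" "G.ord a \<noteq> H.ord d" by blast
  have 1: "cyc_adj XX (\<one>\<^bsub>G\<^esub>, b) (a, \<one>\<^bsub>H\<^esub>)" using adj_sym[OF AB_adj[OF a(1) b(1) a(2) b(2)]] a(3) by simp
  have 2: "cyc_adj XX (a, \<one>\<^bsub>H\<^esub>) (\<one>\<^bsub>G\<^esub>, d)" using AB_adj[OF a(1) d(1) a(2) d(2)] a(4) by simp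
  show ?thesis by (rule D_trans[OF D1[OF 1] D1[OF 2]]) simp
next
  case False
  obtain a0 where a0: "a0 \<in> carrier G" "nprime (G.ord a0)" using exG by blast
  have ne: "H.ord b \<noteq> H.ord d"
  proof
    assume eq: "H.ord b = H.ord d"
    then obtain a where "a \<in> carrier G" "nprime (G.ord a)" "G.ord a \<noteq> H.ord b" using nex by blast
    then show False using False eq by auto
  qed
  have "G.ord a0 = H.ord b \<or> G.ord a0 = H.ord d" using False a0 by blast
  then show ?thesis
  proof
    assume h: "G.ord a0 = H.ord b"
    have 1: "D XX 2 (\<one>\<^bsub>G\<^esub>, b) (a0, \<one>\<^bsub>H\<^esub>)" by (rule D_sym[OF AB2[OF a0 b]])
    have 2: "cyc_adj XX (a0, \<one>\<^bsub>H\<^esub>) (\<one>\<^bsub>G\<^esub>, d)"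
      using AB_adj[OF a0(1) d(1) a0(2) d(2)] h ne by simp
    show ?thesis by (rule D_trans[OF 1 D1[OF 2]]) simp
  next
    assume h: "G.ord a0 = H.ord d"
    have 1: "cyc_adj XX (\<one>\<^bsub>G\<^esub>, b) (a0, \<one>\<^bsub>H\<^esub>)"
      using adj_sym[OF AB_adj[OF a0(1) b(1) a0(2) b(2)]] h ne by simp
    have 2: "D XX 2 (a0, \<one>\<^bsub>H\<^esub>) (\<one>\<^bsub>G\<^esub>, d)" by (rule AB2[OF a0 d])
    show ?thesis by (rule D_trans[OF D1[OF 1] 2]) simp
  qed
qed

lemma excA:
  assumes a: "a \<in> carrier G" "G.ord a = r" and c: "c \<in> carrier G" "G.ord c = r" and pr: "nprime r"
    and allH: "\<forall>b\<in>carrier H. nprime (H.ord b) \<longrightarrow> H.ord b = r"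
  shows "D XX 4 (a, \<one>\<^bsub>H\<^esub>) (c, \<one>\<^bsub>H\<^esub>)"
proof -
  obtain b0 where b0: "b0 \<in> carrier H" "nprime (H.ord b0)" using exH by blast
  have hb: "H.ord b0 = r" using allH b0 by blast
  have step: "\<exists>e\<in>carrier G. nprime (G.ord e) \<and> G.ord e \<noteq> r \<and> e \<otimes>\<^bsub>G\<^esub> x = x \<otimes>\<^bsub>G\<^esub> e"
    if x: "x \<in> carrier G" "G.ord x = r" for x
  proof -
    have o: "X.ord (x, b0) = r" using ordX_same[OF x(1) b0(1) x(2) hb] .
    obtain r' where r': "nprime r'" "r' \<noteq> X.ord (x, b0)" and alt:
      "(\<exists>e\<in>carrier G. G.ord e = r' \<and> e \<otimes>\<^bsub>G\<^esub> x = x \<otimes>\<^bsub>G\<^esub> e) \<or>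
       (\<exists>f\<in>carrier H. H.ord f = r' \<and> f \<otimes>\<^bsub>H\<^esub> b0 = b0 \<otimes>\<^bsub>H\<^esub> f)"
      using anchor[OF x(1) b0(1)] o pr by auto
    have "\<not> (\<exists>f\<in>carrier H. H.ord f = r' \<and> f \<otimes>\<^bsub>H\<^esub> b0 = b0 \<otimes>\<^bsub>H\<^esub> f)"
      using allH r' o by auto
    then show ?thesis using alt r' o by auto
  qed
  obtain e where e: "e \<in> carrier G" "nprime (G.ord e)" "G.ord e \<noteq> r" "e \<otimes>\<^bsub>G\<^esub> a = a \<otimes>\<^bsub>G\<^esub> e"
    using step[OF a] by blast
  obtain e' where e': "e' \<in> carrier G" "nprime (G.ord e')" "G.ord e' \<noteq> r" "e' \<otimes>\<^bsub>G\<^esub> c = c \<otimes>\<^bsub>G\<^esub> e'"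
    using step[OF c] by blast
  have 1: "cyc_adj XX (a, \<one>\<^bsub>H\<^esub>) (e, \<one>\<^bsub>H\<^esub>)" using AA_adj[OF a(1) e(1) e(4)] a pr e by simp
  have 2: "cyc_adj XX (e, \<one>\<^bsub>H\<^esub>) (\<one>\<^bsub>G\<^esub>, b0)" using AB_adj[OF e(1) b0(1) e(2) b0(2)] hb e by simp
  have 3: "cyc_adj XX (\<one>\<^bsub>G\<^esub>, b0) (e', \<one>\<^bsub>H\<^esub>)" using adj_sym[OF AB_adj[OF e'(1) b0(1) e'(2) b0(2)]] hb e' by simp
  have 4: "cyc_adj XX (e', \<one>\<^bsub>H\<^esub>) (c, \<one>\<^bsub>H\<^esub>)" using adj_sym[OF AA_adj[OF c(1) e'(1) e'(4)]] c pr e' by simp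
  have "D XX 2 (a, \<one>\<^bsub>H\<^esub>) (\<one>\<^bsub>G\<^esub>, b0)" by (rule D_trans[OF D1[OF 1] D1[OF 2]]) simp
  moreover have "D XX 2 (\<one>\<^bsub>G\<^esub>, b0) (c, \<one>\<^bsub>H\<^esub>)" by (rule D_trans[OF D1[OF 3] D1[OF 4]]) simp
  ultimately show ?thesis by (rule D_trans) simp
qed

lemma excB:
  assumes b: "b \<in> carrier H" "H.ord b = r" and d: "d \<in> carrier H" "H.ord d = r" and pr: "nprime r"
    and allG: "\<forall>a\<in>carrier G. nprime (G.ord a) \<longrightarrow> G.ord a = r"
  shows "D XX 4 (\<one>\<^bsub>G\<^esub>, b) (\<one>\<^bsub>G\<^esub>, d)"
proof -
  obtain a0 where a0: "a0 \<in> carrier G" "nprime (G.ord a0)" using exG by blast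
  have ha: "G.ord a0 = r" using allG a0 by blast
  have step: "\<exists>f\<in>carrier H. nprime (H.ord f) \<and> H.ord f \<noteq> r \<and> f \<otimes>\<^bsub>H\<^esub> x = x \<otimes>\<^bsub>H\<^esub> f"
    if x: "x \<in> carrier H" "H.ord x = r" for x
  proof -
    have o: "X.ord (a0, x) = r" using ordX_same[OF a0(1) x(1) ha x(2)] .
    obtain r' where r': "nprime r'" "r' \<noteq> X.ord (a0, x)" and alt:
      "(\<exists>e\<in>carrier G. G.ord e = r' \<and> e \<otimes>\<^bsub>G\<^esub> a0 = a0 \<otimes>\<^bsub>G\<^esub> e) \<or>
       (\<exists>f\<in>carrier H. H.ord f = r' \<and> f \<otimes>\<^bsub>H\<^esub> x = x \<otimes>\<^bsub>H\<^esub> f)"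
      using anchor[OF a0(1) x(1)] o pr by auto
    have "\<not> (\<exists>e\<in>carrier G. G.ord e = r' \<and> e \<otimes>\<^bsub>G\<^esub> a0 = a0 \<otimes>\<^bsub>G\<^esub> e)"
      using allG r' o by auto
    then show ?thesis using alt r' o by auto
  qed
  obtain f where f: "f \<in> carrier H" "nprime (H.ord f)" "H.ord f \<noteq> r" "f \<otimes>\<^bsub>H\<^esub> b = b \<otimes>\<^bsub>H\<^esub> f"
    using step[OF b] by blast
  obtain f' where f': "f' \<in> carrier H" "nprime (H.ord f')" "H.ord f' \<noteq> r" "f' \<otimes>\<^bsub>H\<^esub> d = d \<otimes>\<^bsub>H\<^esub> f'"
    using step[OF d] by blast
  have 1: "cyc_adj XX (\<one>\<^bsub>G\<^esub>, b) (\<one>\<^bsub>G\<^esub>, f)" using BB_adj[OF b(1) f(1) f(4)] b pr f by simp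
  have 2: "cyc_adj XX (\<one>\<^bsub>G\<^esub>, f) (a0, \<one>\<^bsub>H\<^esub>)" using adj_sym[OF AB_adj[OF a0(1) f(1) a0(2) f(2)]] ha f by simp
  have 3: "cyc_adj XX (a0, \<one>\<^bsub>H\<^esub>) (\<one>\<^bsub>G\<^esub>, f')" using AB_adj[OF a0(1) f'(1) a0(2) f'(2)] ha f' by simp
  have 4: "cyc_adj XX (\<one>\<^bsub>G\<^esub>, f') (\<one>\<^bsub>G\<^esub>, d)" using adj_sym[OF BB_adj[OF d(1) f'(1) f'(4)]] d pr f' by simp
  have "D XX 2 (\<one>\<^bsub>G\<^esub>, b) (a0, \<one>\<^bsub>H\<^esub>)" by (rule D_trans[OF D1[OF 1] D1[OF 2]]) simp
  moreover have "D XX 2 (a0, \<one>\<^bsub>H\<^esub>) (\<one>\<^bsub>G\<^esub>, d)" by (rule D_trans[OF D1[OF 3] D1[OF 4]]) simp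
  ultimately show ?thesis by (rule D_trans) simp
qed

end

context twogrp
begin

lemma anchor_kind:
  assumes x: "a \<in> carrier G" "b \<in> carrier H" "nprime (X.ord (a, b))"
  shows "(\<exists>e\<in>carrier G. nprime (G.ord e) \<and> D XX 1 (a, b) (e, \<one>\<^bsub>H\<^esub>) \<and>
            (b \<noteq> \<one>\<^bsub>H\<^esub> \<longrightarrow> G.ord e \<noteq> X.ord (a, b)) \<and> (b = \<one>\<^bsub>H\<^esub> \<longrightarrow> e = a))
       \<or> (\<exists>f\<in>carrier H. nprime (H.ord f) \<and> D XX 1 (a, b) (\<one>\<^bsub>G\<^esub>, f) \<and>
            (a \<noteq> \<one>\<^bsub>G\<^esub> \<longrightarrow> H.ord f \<noteq> X.ord (a, b)) \<and> (a = \<one>\<^bsub>G\<^esub> \<longrightarrow> f = b))"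
proof -
  have xc: "(a, b) \<in> carrier XX" using x by simp
  have xv: "(a, b) \<in> cyc_vertices XX" using vertX[OF xc x(3)] .
  show ?thesis
  proof (cases "b = \<one>\<^bsub>H\<^esub>")
    case True
    have "G.ord a = X.ord (a, b)" using ordX_A[OF x(1)] True by simp
    then have "nprime (G.ord a)" using x(3) by simp
    moreover have "D XX 1 (a, b) (a, \<one>\<^bsub>H\<^esub>)" using D_refl[OF xv] True by simp
    ultimately show ?thesis using x(1) True by blast
  next
    case bF: False
    show ?thesis
    proof (cases "a = \<one>\<^bsub>G\<^esub>")
      case True
      have "H.ord b = X.ord (a, b)" using ordX_B[OF x(2)] True by simp
      then have "nprime (H.ord b)" using x(3) by simp
      moreover have "D XX 1 (a, b) (\<one>\<^bsub>G\<^esub>, b)" using D_refl[OF xv] True by simp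
      ultimately show ?thesis using x(2) True by blast
    next
      case aF: False
      obtain r where r: "nprime r" "r \<noteq> X.ord (a, b)" and alt:
        "(\<exists>e\<in>carrier G. G.ord e = r \<and> e \<otimes>\<^bsub>G\<^esub> a = a \<otimes>\<^bsub>G\<^esub> e) \<or>
         (\<exists>f\<in>carrier H. H.ord f = r \<and> f \<otimes>\<^bsub>H\<^esub> b = b \<otimes>\<^bsub>H\<^esub> f)"
        using anchor[OF x] by blast
      from alt show ?thesis
      proof
        assume "\<exists>e\<in>carrier G. G.ord e = r \<and> e \<otimes>\<^bsub>G\<^esub> a = a \<otimes>\<^bsub>G\<^esub> e"
        then obtain e where e: "e \<in> carrier G" "G.ord e = r" "e \<otimes>\<^bsub>G\<^esub> a = a \<otimes>\<^bsub>G\<^esub> e" by blast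
        have "cyc_adj XX (a, b) (e, \<one>\<^bsub>H\<^esub>)" using MA_adj[OF x e(1) e(3)] e(2) r by simp
        then have "D XX 1 (a, b) (e, \<one>\<^bsub>H\<^esub>)" by (rule D1)
        then show ?thesis using e r bF by blast
      next
        assume "\<exists>f\<in>carrier H. H.ord f = r \<and> f \<otimes>\<^bsub>H\<^esub> b = b \<otimes>\<^bsub>H\<^esub> f"
        then obtain f where f: "f \<in> carrier H" "H.ord f = r" "f \<otimes>\<^bsub>H\<^esub> b = b \<otimes>\<^bsub>H\<^esub> f" by blast
        have "cyc_adj XX (a, b) (\<one>\<^bsub>G\<^esub>, f)" using MB_adj[OF x f(1) f(3)] f(2) r by simp
        then have "D XX 1 (a, b) (\<one>\<^bsub>G\<^esub>, f)" by (rule D1)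
        then show ?thesis using f r aF by blast
      qed
    qed
  qed
qed

lemma main5:
  assumes x: "a \<in> carrier G" "b \<in> carrier H" "nprime (X.ord (a, b))"
    and y: "c \<in> carrier G" "d \<in> carrier H" "nprime (X.ord (c, d))"
  shows "D XX 5 (a, b) (c, d)"
proof -
  note ax = anchor_kind[OF x]
  note ay = anchor_kind[OF y]
  show ?thesis
  proof (cases "\<exists>e\<in>carrier G. nprime (G.ord e) \<and> D XX 1 (a, b) (e, \<one>\<^bsub>H\<^esub>) \<and>
            (b \<noteq> \<one>\<^bsub>H\<^esub> \<longrightarrow> G.ord e \<noteq> X.ord (a, b)) \<and> (b = \<one>\<^bsub>H\<^esub> \<longrightarrow> e = a)")
    case xA: True
    then obtain e where e: "e \<in> carrier G" "nprime (G.ord e)" "D XX 1 (a, b) (e, \<one>\<^bsub>H\<^esub>)"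
      "b \<noteq> \<one>\<^bsub>H\<^esub> \<longrightarrow> G.ord e \<noteq> X.ord (a, b)" "b = \<one>\<^bsub>H\<^esub> \<longrightarrow> e = a" by blast
    show ?thesis
    proof (cases "\<exists>k\<in>carrier G. nprime (G.ord k) \<and> D XX 1 (c, d) (k, \<one>\<^bsub>H\<^esub>) \<and>
            (d \<noteq> \<one>\<^bsub>H\<^esub> \<longrightarrow> G.ord k \<noteq> X.ord (c, d)) \<and> (d = \<one>\<^bsub>H\<^esub> \<longrightarrow> k = c)")
      case True
      then obtain k where k: "k \<in> carrier G" "nprime (G.ord k)" "D XX 1 (c, d) (k, \<one>\<^bsub>H\<^esub>)"
        "d \<noteq> \<one>\<^bsub>H\<^esub> \<longrightarrow> G.ord k \<noteq> X.ord (c, d)" "d = \<one>\<^bsub>H\<^esub> \<longrightarrow> k = c" by blast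
      show ?thesis
      proof (cases "G.ord e = G.ord k \<and> (\<forall>b'\<in>carrier H. nprime (H.ord b') \<longrightarrow> H.ord b' = G.ord e)")
        case False
        have "D XX 3 (e, \<one>\<^bsub>H\<^esub>) (k, \<one>\<^bsub>H\<^esub>)" using AA3[OF e(1,2) k(1,2) False] .
        then have "D XX 4 (a, b) (k, \<one>\<^bsub>H\<^esub>)" by (rule D_trans[OF e(3)]) simp
        then show ?thesis by (rule D_trans[OF _ D_sym[OF k(3)]]) simp
      next
        case exc: True
        have b1: "b = \<one>\<^bsub>H\<^esub>"
        proof (rule ccontr)
          assume bn: "b \<noteq> \<one>\<^bsub>H\<^esub>"
          then have "H.ord b = X.ord (a, b)" using ord_comp[OF x] by blast
          then have "X.ord (a, b) = G.ord e" using exc x(2,3) by metis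
          then show False using e(4) bn by simp
        qed
        have d1: "d = \<one>\<^bsub>H\<^esub>"
        proof (rule ccontr)
          assume dn: "d \<noteq> \<one>\<^bsub>H\<^esub>"
          then have "H.ord d = X.ord (c, d)" using ord_comp[OF y] by blast
          then have "X.ord (c, d) = G.ord k" using exc y(2,3) by metis
          then show False using k(4) dn by simp
        qed
        have ea: "e = a" "k = c" using b1 d1 e(5) k(5) by auto
        have "D XX 4 (e, \<one>\<^bsub>H\<^esub>) (k, \<one>\<^bsub>H\<^esub>)"
          by (rule excA[OF e(1) refl k(1) exc[THEN conjunct1, symmetric] e(2) exc[THEN conjunct2]])
        then have "D XX 4 (a, \<one>\<^bsub>H\<^esub>) (c, \<one>\<^bsub>H\<^esub>)" using ea by simp
        then show ?thesis using b1 d1 D_mono by fastforce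
      qed
    next
      case False
      then obtain f where f: "f \<in> carrier H" "nprime (H.ord f)" "D XX 1 (c, d) (\<one>\<^bsub>G\<^esub>, f)" using ay by blast
      have "D XX 2 (e, \<one>\<^bsub>H\<^esub>) (\<one>\<^bsub>G\<^esub>, f)" by (rule AB2[OF e(1,2) f(1,2)])
      then have "D XX 3 (a, b) (\<one>\<^bsub>G\<^esub>, f)" by (rule D_trans[OF e(3)]) simp
      then show ?thesis by (rule D_trans[OF _ D_sym[OF f(3)]]) simp
    qed
  next
    case xB: False
    then obtain f where f: "f \<in> carrier H" "nprime (H.ord f)" "D XX 1 (a, b) (\<one>\<^bsub>G\<^esub>, f)"
      "a \<noteq> \<one>\<^bsub>G\<^esub> \<longrightarrow> H.ord f \<noteq> X.ord (a, b)" "a = \<one>\<^bsub>G\<^esub> \<longrightarrow> f = b" using ax by blast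
    show ?thesis
    proof (cases "\<exists>k\<in>carrier G. nprime (G.ord k) \<and> D XX 1 (c, d) (k, \<one>\<^bsub>H\<^esub>) \<and>
            (d \<noteq> \<one>\<^bsub>H\<^esub> \<longrightarrow> G.ord k \<noteq> X.ord (c, d)) \<and> (d = \<one>\<^bsub>H\<^esub> \<longrightarrow> k = c)")
      case True
      then obtain k where k: "k \<in> carrier G" "nprime (G.ord k)" "D XX 1 (c, d) (k, \<one>\<^bsub>H\<^esub>)" by blast
      have "D XX 2 (\<one>\<^bsub>G\<^esub>, f) (k, \<one>\<^bsub>H\<^esub>)" by (rule D_sym[OF AB2[OF k(1,2) f(1,2)]])
      then have "D XX 3 (a, b) (k, \<one>\<^bsub>H\<^esub>)" by (rule D_trans[OF f(3)]) simp
      then show ?thesis by (rule D_trans[OF _ D_sym[OF k(3)]]) simp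
    next
      case False
      then obtain g where g: "g \<in> carrier H" "nprime (H.ord g)" "D XX 1 (c, d) (\<one>\<^bsub>G\<^esub>, g)"
        "c \<noteq> \<one>\<^bsub>G\<^esub> \<longrightarrow> H.ord g \<noteq> X.ord (c, d)" "c = \<one>\<^bsub>G\<^esub> \<longrightarrow> g = d" using ay by blast
      show ?thesis
      proof (cases "H.ord f = H.ord g \<and> (\<forall>a'\<in>carrier G. nprime (G.ord a') \<longrightarrow> G.ord a' = H.ord f)")
        case False
        have "D XX 3 (\<one>\<^bsub>G\<^esub>, f) (\<one>\<^bsub>G\<^esub>, g)" using BB3[OF f(1,2) g(1,2) False] .
        then have "D XX 4 (a, b) (\<one>\<^bsub>G\<^esub>, g)" by (rule D_trans[OF f(3)]) simp
        then show ?thesis by (rule D_trans[OF _ D_sym[OF g(3)]]) simp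
      next
        case exc: True
        have a1: "a = \<one>\<^bsub>G\<^esub>"
        proof (rule ccontr)
          assume an: "a \<noteq> \<one>\<^bsub>G\<^esub>"
          then have "G.ord a = X.ord (a, b)" using ord_comp[OF x] by blast
          then have "X.ord (a, b) = H.ord f" using exc x(1,3) by metis
          then show False using f(4) an by simp
        qed
        have c1: "c = \<one>\<^bsub>G\<^esub>"
        proof (rule ccontr)
          assume cn: "c \<noteq> \<one>\<^bsub>G\<^esub>"
          then have "G.ord c = X.ord (c, d)" using ord_comp[OF y] by blast
          then have "X.ord (c, d) = H.ord g" using exc y(1,3) by metis
          then show False using g(4) cn by simp
        qed
        have fb: "f = b" "g = d" using a1 c1 f(5) g(5) by auto
        have "D XX 4 (\<one>\<^bsub>G\<^esub>, f) (\<one>\<^bsub>G\<^esub>, g)"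
          by (rule excB[OF f(1) refl g(1) exc[THEN conjunct1, symmetric] f(2) exc[THEN conjunct2]])
        then have "D XX 4 (\<one>\<^bsub>G\<^esub>, b) (\<one>\<^bsub>G\<^esub>, d)" using fb by simp
        then show ?thesis using a1 c1 D_mono by fastforce
      qed
    qed
  qed
qed

lemma near_prime:
  assumes v: "v \<in> cyc_vertices XX"
  shows "\<exists>a b. a \<in> carrier G \<and> b \<in> carrier H \<and> nprime (X.ord (a, b)) \<and> D XX 1 v (a, b)"
proof -
  have vc: "v \<in> carrier XX" and v1: "v \<noteq> \<one>\<^bsub>XX\<^esub>" using v unfolding cyc_vertices_def by auto
  obtain k :: nat where k: "nprime (X.ord (v [^]\<^bsub>XX\<^esub> k))" "v [^]\<^bsub>XX\<^esub> k \<noteq> \<one>\<^bsub>XX\<^esub>"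
    using X.prime_pow_exists[OF finX vc v1] by blast
  have wc: "v [^]\<^bsub>XX\<^esub> k \<in> carrier XX" using X.nat_pow_closed[OF vc] .
  have "D XX 1 v (v [^]\<^bsub>XX\<^esub> k)"
  proof (cases "v [^]\<^bsub>XX\<^esub> k = v")
    case True
    then show ?thesis using D_refl[OF v] by simp
  next
    case False
    show ?thesis by (rule D1[OF X.adj_pow[OF vc v1 k(2) False]])
  qed
  moreover obtain a b where "v [^]\<^bsub>XX\<^esub> k = (a, b)" by (cases "v [^]\<^bsub>XX\<^esub> k")
  ultimately show ?thesis using wc k(1) by auto
qed

lemma diam7: "cyc_diam XX \<le> 7"
proof (rule diam_le)
  obtain g where g: "g \<in> carrier G" "g \<noteq> \<one>\<^bsub>G\<^esub>" using ntG G.one_closed by blast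
  then have "(g, \<one>\<^bsub>H\<^esub>) \<in> cyc_vertices XX" unfolding cyc_vertices_def by simp
  then show "cyc_vertices XX \<noteq> {}" by blast
next
  fix v w assume v: "v \<in> cyc_vertices XX" and w: "w \<in> cyc_vertices XX"
  obtain a b where ab: "a \<in> carrier G" "b \<in> carrier H" "nprime (X.ord (a, b))" "D XX 1 v (a, b)"
    using near_prime[OF v] by blast
  obtain c d where cd: "c \<in> carrier G" "d \<in> carrier H" "nprime (X.ord (c, d))" "D XX 1 w (c, d)"
    using near_prime[OF w] by blast
  have "D XX 5 (a, b) (c, d)" by (rule main5[OF ab(1-3) cd(1-3)])
  then have "D XX 6 v (c, d)" by (rule D_trans[OF ab(4)]) simp
  then show "D XX 7 v w" by (rule D_trans[OF _ D_sym[OF cd(4)]]) simp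
qed

end

theorem theorem4p2:
  fixes G :: "('a, 'c) monoid_scheme" and H :: "('b, 'd) monoid_scheme"
  assumes "group G" and "group H"
    and "finite (carrier G)" and "finite (carrier H)"
    and "carrier G \<noteq> {\<one>\<^bsub>G\<^esub>}" and "carrier H \<noteq> {\<one>\<^bsub>H\<^esub>}"
    and "cyc_connected (G \<times>\<times> H)"
  shows "cyc_diam (G \<times>\<times> H) \<le> 7"
proof -
  interpret twogrp G H
    by (rule twogrp.intro[OF assms(1,2)], unfold_locales) (rule assms)+
  show ?thesis by (rule diam7)
qed

end
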